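(* Let $G$ be the infinite king grid. The code $C=\{(x,y)\in\mathbb{Z}^2\mid |x|+|y|\equiv 0\pmod 3\}$ is solid-locating-dominating in $G$ and its density is $1/3$.
   Context: The infinite king grid $G=(V,E)$ has $V=\mathbb{Z}^2$, and distinct vertices $(u_1,u_2)$, $(v_1,v_2)$ are adjacent iff $|u_1-v_1|\le1$ and $|u_2-v_2|\le1$. Let $V_n=\{(x,y)\mid |x|\le n,|y|\le n\}$; the density of a code $C\subseteq V$ is $D(C)=\limsup_{n\to\infty}|C\cap V_n|/|V_n|$. $N[v]$ is the closed neighbourhood of $v$, and for a code $C$, $I(C;v)=N[v]\cap C$. A code $C$ is solid-locating-dominating if for all distinct $u,v\in V\setminus C$, $I(C;u)\setminus I(C;v)\ne\emptyset$. *)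

theory Defs
  imports "HOL-Analysis.Analysis" "HOL-Library.Liminf_Limsup"
begin

type_synonym vertex = "int \<times> int"

definition king_adj :: "vertex \<Rightarrow> vertex \<Rightarrow> bool" where
  "king_adj u v \<longleftrightarrow> u \<noteq> v \<and> \<bar>fst u - fst v\<bar> \<le> 1 \<and> \<bar>snd u - snd v\<bar> \<le> 1"

definition closed_nbhd :: "vertex \<Rightarrow> vertex set" where
  "closed_nbhd v = {u. u = v \<or> king_adj u v}"

definition I_set :: "vertex set \<Rightarrow> vertex \<Rightarrow> vertex set" where
  "I_set C v = closed_nbhd v \<inter> C"

definition solid_locating_dominating :: "vertex set \<Rightarrow> bool" where
  "solid_locating_dominating C \<longleftrightarrow>
     (\<forall>u v. u \<notin> C \<and> v \<notin> C \<and> u \<noteq> v \<longrightarrow> I_set C u - I_set C v \<noteq> {})"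

definition V_box :: "nat \<Rightarrow> vertex set" where
  "V_box n = {(x, y). \<bar>x\<bar> \<le> int n \<and> \<bar>y\<bar> \<le> int n}"

definition density :: "vertex set \<Rightarrow> ereal" where
  "density C = limsup (\<lambda>n. ereal (real (card (C \<inter> V_box n)) / real (card (V_box n))))"

end

theory Submission
  imports Defs
begin

definition cd3 :: "int \<Rightarrow> int \<Rightarrow> bool" where "cd3 x y \<longleftrightarrow> (\<bar>x\<bar>+\<bar>y\<bar>) mod 3 = 0"
definition PP :: "int \<Rightarrow> int \<Rightarrow> int \<Rightarrow> int \<Rightarrow> bool" where
 "PP a b c d \<longleftrightarrow> (\<exists>x y. cd3 x y \<and> \<bar>x-a\<bar>\<le>1 \<and> \<bar>y-b\<bar>\<le>1 \<and> \<not>(\<bar>x-c\<bar>\<le>1 \<and> \<bar>y-d\<bar>\<le>1))"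

lemma wit: "cd3 x y \<Longrightarrow> \<bar>x-a\<bar>\<le>1 \<Longrightarrow> \<bar>y-b\<bar>\<le>1 \<Longrightarrow> \<not>(\<bar>x-c\<bar>\<le>1 \<and> \<bar>y-d\<bar>\<le>1) \<Longrightarrow> PP a b c d"
  unfolding PP_def by blast

lemma core: assumes "0 \<le> b" "b \<le> a" "\<not> cd3 a b" "\<not> cd3 c d" "(a,b)\<noteq>(c,d)" shows "PP a b c d"
proof (cases "b \<ge> 1")
  case True
  then have s: "(a+b) mod 3 = 1 \<or> (a+b) mod 3 = 2" using assms unfolding cd3_def by auto
  then show ?thesis
  proof
    assume h: "(a+b) mod 3 = 1"
    have c1_0: "cd3 (a-1) b" using h True assms(2) unfolding cd3_def by (simp add: abs_if; presburger)
    have c1_1: "cd3 a (b-1)" using h True assms(2) unfolding cd3_def by (simp add: abs_if; presburger)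
    have c1_2: "cd3 (a+1) (b+1)" using h True assms(2) unfolding cd3_def by (simp add: abs_if; presburger)
    note c1 = c1_0 c1_1 c1_2
    show ?thesis
    proof (cases "\<bar>a-1-c\<bar>\<le>1 \<and> \<bar>b-d\<bar>\<le>1")
      case False then show ?thesis using wit[OF c1(1)] by auto
    next
      case T1: True show ?thesis
      proof (cases "\<bar>a-c\<bar>\<le>1 \<and> \<bar>b-1-d\<bar>\<le>1")
        case False then show ?thesis using wit[OF c1(2)] by auto
      next
        case T2: True
        have "\<not>(\<bar>a+1-c\<bar>\<le>1 \<and> \<bar>b+1-d\<bar>\<le>1)" using T1 T2 assms(5) by auto
        then show ?thesis using wit[OF c1(3)] by auto
      qed
    qed
  next
    assume h: "(a+b) mod 3 = 2"
    have c1_0: "cd3 (a-1) (b-1)" using h True assms(2) unfolding cd3_def by (simp add: abs_if; presburger)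
    have c1_1: "cd3 (a+1) b" using h True assms(2) unfolding cd3_def by (simp add: abs_if; presburger)
    have c1_2: "cd3 a (b+1)" using h True assms(2) unfolding cd3_def by (simp add: abs_if; presburger)
    note c1 = c1_0 c1_1 c1_2
    show ?thesis
    proof (cases "\<bar>a-1-c\<bar>\<le>1 \<and> \<bar>b-1-d\<bar>\<le>1")
      case False then show ?thesis using wit[OF c1(1)] by auto
    next
      case T1: True show ?thesis
      proof (cases "\<bar>a+1-c\<bar>\<le>1 \<and> \<bar>b-d\<bar>\<le>1")
        case False then show ?thesis using wit[OF c1(2)] by auto
      next
        case T2: True
        have "\<not>(\<bar>a-c\<bar>\<le>1 \<and> \<bar>b+1-d\<bar>\<le>1)" using T1 T2 assms(5) by auto
        then show ?thesis using wit[OF c1(3)] by auto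
      qed
    qed
  qed
next
  case False
  then have b0: "b = 0" using assms by auto
  then have a1: "a \<ge> 1" using assms unfolding cd3_def by (cases "a = 0") auto
  have s: "a mod 3 = 1 \<or> a mod 3 = 2" using assms b0 a1 unfolding cd3_def by auto
  then show ?thesis
  proof
    assume h: "a mod 3 = 1"
    have c1_0: "cd3 (a-1) 0" using h a1 unfolding cd3_def by (simp add: abs_if; presburger)
    have c1_1: "cd3 (a+1) 1" using h a1 unfolding cd3_def by (simp add: abs_if; presburger)
    have c1_2: "cd3 (a+1) (-1)" using h a1 unfolding cd3_def by (simp add: abs_if; presburger)
    note c1 = c1_0 c1_1 c1_2
    show ?thesis
    proof (cases "\<bar>a-1-c\<bar>\<le>1 \<and> \<bar>0-d\<bar>\<le>1")
      case False then show ?thesis using wit[OF c1(1)] b0 by auto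
    next
      case T1: True show ?thesis
      proof (cases "\<bar>a+1-c\<bar>\<le>1 \<and> \<bar>1-d\<bar>\<le>1")
        case False then show ?thesis using wit[OF c1(2)] b0 by auto
      next
        case T2: True
        have "\<not>(\<bar>a+1-c\<bar>\<le>1 \<and> \<bar>-1-d\<bar>\<le>1)" using T1 T2 assms(5) b0 by auto
        then show ?thesis using wit[OF c1(3)] b0 by auto
      qed
    qed
  next
    assume h: "a mod 3 = 2"
    have c1_0: "cd3 (a+1) 0" using h a1 unfolding cd3_def by (simp add: abs_if; presburger)
    have c1_1: "cd3 a 1" using h a1 unfolding cd3_def by (simp add: abs_if; presburger)
    have c1_2: "cd3 a (-1)" using h a1 unfolding cd3_def by (simp add: abs_if; presburger)
    note c1 = c1_0 c1_1 c1_2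
    show ?thesis
    proof (cases "\<bar>a+1-c\<bar>\<le>1 \<and> \<bar>0-d\<bar>\<le>1")
      case False then show ?thesis using wit[OF c1(1)] b0 by auto
    next
      case T1: True show ?thesis
      proof (cases "\<bar>a-c\<bar>\<le>1 \<and> \<bar>1-d\<bar>\<le>1")
        case False then show ?thesis using wit[OF c1(2)] b0 by auto
      next
        case T2: True
        have "(c,d) \<noteq> (a+1,0)" using assms(4) c1(1) by auto
        then have "\<not>(\<bar>a-c\<bar>\<le>1 \<and> \<bar>-1-d\<bar>\<le>1)" using T1 T2 assms(5) b0 by auto
        then show ?thesis using wit[OF c1(3)] b0 by auto
      qed
    qed
  qed
qed

lemma sym1: "PP (-a) b (-c) d \<Longrightarrow> PP a b c d"
  unfolding PP_def cd3_def by (elim exE, rule_tac x="-x" in exI, rule_tac x=y in exI) auto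
lemma sym2: "PP a (-b) c (-d) \<Longrightarrow> PP a b c d"
  unfolding PP_def cd3_def by (elim exE, rule_tac x="x" in exI, rule_tac x="-y" in exI) auto
lemma sym3: "PP b a d c \<Longrightarrow> PP a b c d"
  unfolding PP_def cd3_def by (elim exE, rule_tac x="y" in exI, rule_tac x="x" in exI) (auto simp: add.commute)

lemma cdsym: "cd3 (-a) b = cd3 a b" "cd3 a (-b) = cd3 a b" "cd3 b a = cd3 a b"
  unfolding cd3_def by (auto simp: add.commute)

lemma quad: assumes "0 \<le> a" "0 \<le> b" "\<not> cd3 a b" "\<not> cd3 c d" "(a,b)\<noteq>(c,d)" shows "PP a b c d"
proof (cases "b \<le> a")
  case True then show ?thesis using core assms by auto
next
  case False then show ?thesis using core[of a b d c] assms cdsym sym3 by auto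
qed

lemma allPP: assumes "\<not> cd3 a b" "\<not> cd3 c d" "(a,b)\<noteq>(c,d)" shows "PP a b c d"
proof -
  have h1: "PP a b c d" if "0 \<le> b" "\<not> cd3 a b" "\<not> cd3 c d" "(a,b)\<noteq>(c,d)" for a b c d
  proof (cases "0 \<le> a")
    case True then show ?thesis using quad that by auto
  next
    case False then show ?thesis using quad[of "-a" b "-c" d] that cdsym sym1 by auto
  qed
  show ?thesis
  proof (cases "0 \<le> b")
    case True then show ?thesis using h1 assms by auto
  next
    case False then show ?thesis using h1[where a=a and b="-b" and c=c and d="-d"] assms cdsym sym2 by auto
  qed
qed

definition fc :: "int \<Rightarrow> int \<Rightarrow> nat \<Rightarrow> nat" where
  "fc c a m = card {y::int. a \<le> y \<and> y < a + int m \<and> (c+y) mod 3 = 0}"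

lemma three_set: "{y::int. t \<le> y \<and> y < t+3 \<and> (c+y) mod 3 = 0} = {t + (-(c+t)) mod 3}"
  by (auto simp: set_eq_iff; presburger)

lemma fin_iv: "finite {y::int. a \<le> y \<and> y < b \<and> P y}"
  by (rule finite_subset[of _ "{a..<b}"]) auto

lemma fc_step: "fc c a (m+3) = fc c a m + 1"
proof -
  have e: "{y::int. a \<le> y \<and> y < a + int (m+3) \<and> (c+y) mod 3 = 0} =
        {y::int. a \<le> y \<and> y < a + int m \<and> (c+y) mod 3 = 0} \<union> {y::int. a + int m \<le> y \<and> y < (a+int m)+3 \<and> (c+y) mod 3 = 0}"
    by (rule set_eqI) (simp; arith)
  have "card ({y::int. a \<le> y \<and> y < a + int m \<and> (c+y) mod 3 = 0} \<union> {y::int. a + int m \<le> y \<and> y < (a+int m)+3 \<and> (c+y) mod 3 = 0})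
    = fc c a m + card {y::int. a + int m \<le> y \<and> y < (a+int m)+3 \<and> (c+y) mod 3 = 0}"
    unfolding fc_def by (rule card_Un_disjoint[OF fin_iv fin_iv]) auto
  then show ?thesis unfolding fc_def e three_set by simp
qed

lemma fc_small: "fc c a m \<le> m"
proof -
  have "fc c a m \<le> card {a..<a+int m}" unfolding fc_def by (rule card_mono) auto
  then show ?thesis by simp
qed

lemma fc_bound: "3 * int (fc c a m) \<le> int m + 6 \<and> int m \<le> 3 * int (fc c a m) + 6"
proof (induction m rule: less_induct)
  case (less m)
  show ?case
  proof (cases "m < 3")
    case True then show ?thesis using fc_small[of c a m] by linarith
  next
    case False
    then obtain k where k: "m = k + 3" using le_Suc_ex[of 3 m] by (auto simp: add.commute)
    have "k < m" using k by simp
    then have ih: "3 * int (fc c a k) \<le> int k + 6 \<and> int k \<le> 3 * int (fc c a k) + 6" by (rule less)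
    have "fc c a m = fc c a k + 1" unfolding k by (rule fc_step)
    then show ?thesis using ih k by simp
  qed
qed
definition RR :: "int \<Rightarrow> nat \<Rightarrow> int set" where
  "RR x n = {y. \<bar>y\<bar> \<le> int n \<and> (\<bar>x\<bar>+\<bar>y\<bar>) mod 3 = 0}"

lemma RR_card: "\<bar>3 * int (card (RR x n)) - (2 * int n + 1)\<bar> \<le> 12"
proof -
  let ?A = "{y::int. 0 \<le> y \<and> y < 0 + int (n+1) \<and> (\<bar>x\<bar>+y) mod 3 = 0}"
  let ?B = "{y::int. 1 \<le> y \<and> y < 1 + int n \<and> (\<bar>x\<bar>+y) mod 3 = 0}"
  have eq: "RR x n = ?A \<union> uminus ` ?B"
  proof (rule set_eqI)
    fix y show "y \<in> RR x n \<longleftrightarrow> y \<in> ?A \<union> uminus ` ?B"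
    proof (cases "y \<ge> 0")
      case True then show ?thesis unfolding RR_def by auto
    next
      case False
      then have "y \<in> uminus ` ?B \<longleftrightarrow> -y \<in> ?B" by (metis (no_types, lifting) image_iff minus_minus)
      then show ?thesis using False unfolding RR_def by auto
    qed
  qed
  have fA: "finite ?A" by (rule finite_subset[of _ "{0..<int n+1}"]) auto
  have fB: "finite ?B" by (rule finite_subset[of _ "{1..<1+int n}"]) auto
  have "card (RR x n) = card ?A + card (uminus ` ?B)"
    unfolding eq by (rule card_Un_disjoint) (use fA fB in auto)
  also have "card (uminus ` ?B) = card ?B" by (rule card_image) (simp add: inj_on_def)
  finally have "card (RR x n) = fc (\<bar>x\<bar>) 0 (n+1) + fc (\<bar>x\<bar>) 1 n" unfolding fc_def by simp
  then show ?thesis using fc_bound[of "\<bar>x\<bar>" 0 "n+1"] fc_bound[of "\<bar>x\<bar>" 1 n] by auto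
qed

lemma Cbox: "{(x, y). (\<bar>x\<bar> + \<bar>y\<bar>) mod 3 = 0} \<inter> {(x, y). \<bar>x\<bar> \<le> int n \<and> \<bar>y\<bar> \<le> int n}
   = Sigma {-int n..int n} (\<lambda>x. RR x n)"
  unfolding RR_def by auto

lemma total_bound: "\<bar>3 * int (card ({(x, y). (\<bar>x\<bar> + \<bar>y\<bar>) mod 3 = 0} \<inter> {(x, y). \<bar>x\<bar> \<le> int n \<and> \<bar>y\<bar> \<le> int n})) - (2 * int n + 1)^2\<bar>
   \<le> 12 * (2 * int n + 1)"
proof -
  have fR: "finite (RR x n)" for x
    by (rule finite_subset[of _ "{-int n..int n}"]) (auto simp: RR_def)
  have "card (Sigma {-int n..int n} (\<lambda>x. RR x n)) = (\<Sum>x\<in>{-int n..int n}. card (RR x n))"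
    by (rule card_SigmaI) (auto simp: fR)
  then have "3 * int (card (Sigma {-int n..int n} (\<lambda>x. RR x n))) - (2 * int n + 1)^2
     = (\<Sum>x\<in>{-int n..int n}. (3 * int (card (RR x n)) - (2 * int n + 1)))"
    by (simp add: sum_subtractf sum_distrib_left power2_eq_square)
  also have "\<bar>\<dots>\<bar> \<le> (\<Sum>x\<in>{-int n..int n}. \<bar>3 * int (card (RR x n)) - (2 * int n + 1)\<bar>)"
    by (rule sum_abs)
  also have "\<dots> \<le> (\<Sum>x\<in>{-int n..int n}. 12)" by (rule sum_mono) (rule RR_card)
  also have "\<dots> = 12 * (2 * int n + 1)" by simp
  finally show ?thesis unfolding Cbox .
qed

lemma sld: "solid_locating_dominating {(x, y). (\<bar>x\<bar> + \<bar>y\<bar>) mod 3 = 0}"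
  unfolding solid_locating_dominating_def
proof (intro allI impI)
  fix u v :: vertex
  assume as: "u \<notin> {(x, y). (\<bar>x\<bar> + \<bar>y\<bar>) mod 3 = 0} \<and> v \<notin> {(x, y). (\<bar>x\<bar> + \<bar>y\<bar>) mod 3 = 0} \<and> u \<noteq> v"
  obtain a b where u: "u = (a,b)" by (cases u)
  obtain c d where v: "v = (c,d)" by (cases v)
  have "PP a b c d" using as u v by (intro allPP) (auto simp: cd3_def)
  then obtain x y where w: "cd3 x y" "\<bar>x-a\<bar>\<le>1" "\<bar>y-b\<bar>\<le>1" "\<not>(\<bar>x-c\<bar>\<le>1 \<and> \<bar>y-d\<bar>\<le>1)"
    unfolding PP_def by blast
  have "(x,y) \<in> I_set {(x, y). (\<bar>x\<bar> + \<bar>y\<bar>) mod 3 = 0} u"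
    using w u unfolding I_set_def closed_nbhd_def king_adj_def cd3_def by auto
  moreover have "(x,y) \<notin> I_set {(x, y). (\<bar>x\<bar> + \<bar>y\<bar>) mod 3 = 0} v"
    using w v unfolding I_set_def closed_nbhd_def king_adj_def by auto
  ultimately show "I_set {(x, y). (\<bar>x\<bar> + \<bar>y\<bar>) mod 3 = 0} u - I_set {(x, y). (\<bar>x\<bar> + \<bar>y\<bar>) mod 3 = 0} v \<noteq> {}"
    by blast
qed

lemma ratio_bound:
  fixes T N :: real
  assumes "\<bar>3 * T - N^2\<bar> \<le> 12 * N" "N > 0"
  shows "\<bar>T / N^2 - 1/3\<bar> \<le> 4 / N"
proof -
  have "T / N^2 - 1/3 = (3 * T - N^2) / (3 * N^2)" using assms(2) by (simp add: field_simps)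
  then have "\<bar>T / N^2 - 1/3\<bar> = \<bar>3 * T - N^2\<bar> / (3 * N^2)" using assms(2) by simp
  also have "\<dots> \<le> (12 * N) / (3 * N^2)" using assms by (intro divide_right_mono) auto
  also have "\<dots> = 4 / N" using assms(2) by (simp add: field_simps power2_eq_square)
  finally show ?thesis .
qed

lemma dens: "density {(x, y). (\<bar>x\<bar> + \<bar>y\<bar>) mod 3 = 0} = ereal (1/3)"
proof -
  define C :: "vertex set" where "C = {(x, y). (\<bar>x\<bar> + \<bar>y\<bar>) mod 3 = 0}"
  define r where "r n = real (card (C \<inter> V_box n)) / real (card (V_box n))" for n
  have cV: "card (V_box n) = (2 * n + 1)^2" for n
  proof -
    have "V_box n = {-int n..int n} \<times> {-int n..int n}" unfolding V_box_def by auto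
    then have c1: "card (V_box n) = nat (2 * int n + 1) * nat (2 * int n + 1)" by (simp add: card_cartesian_product)
    have e: "nat (2 * int n + 1) = 2 * n + 1" by (simp add: nat_add_distrib nat_mult_distrib)
    show ?thesis unfolding c1 e by (simp only: power2_eq_square)
  qed
  have bnd: "\<bar>r n - 1/3\<bar> \<le> 4 / (2 * real n + 1)" for n
  proof -
    have ib: "\<bar>3 * int (card (C \<inter> V_box n)) - (2 * int n + 1)^2\<bar> \<le> 12 * (2 * int n + 1)"
      using total_bound[of n] unfolding C_def V_box_def .
    have "\<bar>3 * real (card (C \<inter> V_box n)) - (2 * real n + 1)^2\<bar> \<le> 12 * (2 * real n + 1)"
    proof -
      have "real_of_int \<bar>3 * int (card (C \<inter> V_box n)) - (2 * int n + 1)^2\<bar> \<le> real_of_int (12 * (2 * int n + 1))"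
        using ib by linarith
      then show ?thesis by simp
    qed
    moreover have rv: "real (card (V_box n)) = (2 * real n + 1)^2" unfolding cV by simp
    ultimately show ?thesis unfolding r_def rv by (intro ratio_bound) auto
  qed
  have "(\<lambda>n. r n - 1/3) \<longlonglongrightarrow> 0"
  proof (rule Lim_null_comparison)
    show "\<forall>\<^sub>F n in sequentially. norm (r n - 1/3) \<le> 4 / real n"
    proof (rule eventually_sequentiallyI[of 1])
      fix n :: nat assume "1 \<le> n"
      have "4 / (2 * real n + 1) \<le> 4 / real n" using \<open>1 \<le> n\<close> by (intro divide_left_mono) auto
      then show "norm (r n - 1/3) \<le> 4 / real n" using bnd[of n] by simp
    qed
    show "(\<lambda>n. 4 / real n) \<longlonglongrightarrow> 0" by (rule lim_const_over_n)
  qed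
  then have "r \<longlonglongrightarrow> 1/3" by (simp add: LIM_zero_iff)
  then have "(\<lambda>n. ereal (r n)) \<longlonglongrightarrow> ereal (1/3)" by (rule tendsto_ereal)
  then have "limsup (\<lambda>n. ereal (r n)) = ereal (1/3)" by (intro lim_imp_Limsup) auto
  then show ?thesis unfolding density_def r_def C_def .
qed

theorem theorem9:
  shows "solid_locating_dominating {(x, y). (\<bar>x\<bar> + \<bar>y\<bar>) mod 3 = 0}
    \<and> density {(x, y). (\<bar>x\<bar> + \<bar>y\<bar>) mod 3 = 0} = ereal (1/3)"
  using sld dens by blast

end
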